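(* For $n\ge 3$, $a(n,1)=a(n-1,1)+n-1$.
   Context: For $n\ge 2$, $A_n$ is the alternating group on $\{1,\dots,n\}$, $T(A_n)=\{(1\,2)(i\,j)\mid 1\le i<j\le n\}$ (a generating set of $A_n$; note $(1\,2)(1\,2)=e$), and for $v\in A_n$, $\ell_{T(A_n)}(v)=\min\{k\ge 0\mid v=t_1\cdots t_k,\ t_i\in T(A_n)\}$. $a(n,m)$ denotes the number of $v\in A_n$ with $\ell_{T(A_n)}(v)=m$. *)

theory Defs
  imports "HOL-Combinatorics.Combinatorics"
begin

definition altgrp :: "nat \<Rightarrow> (nat \<Rightarrow> nat) set" where
  "altgrp n = {p. p permutes {1..n} \<and> evenperm p}"

definition gensT :: "nat \<Rightarrow> (nat \<Rightarrow> nat) set" where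
  "gensT n = {transpose 1 2 \<circ> transpose i j | i j. 1 \<le> i \<and> i < j \<and> j \<le> n}"

definition lenT :: "nat \<Rightarrow> (nat \<Rightarrow> nat) \<Rightarrow> nat" where
  "lenT n v = (LEAST k. \<exists>ts. length ts = k \<and> set ts \<subseteq> gensT n \<and> foldr (\<circ>) ts id = v)"

definition a_count :: "nat \<Rightarrow> nat \<Rightarrow> nat" where
  "a_count n m = card {v \<in> altgrp n. lenT n v = m}"

end

theory Submission
  imports Defs
begin

abbreviation t12 :: "nat \<Rightarrow> nat" where "t12 \<equiv> transpose (1::nat) 2"

lemma conj_tr: "transpose a b \<circ> t12 = t12 \<circ> transpose (t12 a) (t12 b)"
  by (auto simp: fun_eq_iff transpose_def)

lemma gen_mem:
  assumes "a \<in> {1..n}" "b \<in> {1..n}" "a \<noteq> b"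
  shows "t12 \<circ> transpose a b \<in> gensT n"
proof (cases "a < b")
  case True thus ?thesis using assms unfolding gensT_def by force
next
  case False
  hence "b < a" using assms by simp
  moreover have "transpose a b = transpose b a" by (simp add: transpose_commute)
  ultimately show ?thesis using assms unfolding gensT_def by force
qed

lemma gens_alt:
  assumes "n \<ge> 2" "t \<in> gensT n"
  shows "t \<in> altgrp n"
proof -
  obtain i j where t: "t = t12 \<circ> transpose i j" "1 \<le> i" "i < j" "j \<le> n"
    using assms unfolding gensT_def by blast
  have "t permutes {1..n}" unfolding t(1) using assms t
    by (intro permutes_compose permutes_swap_id) auto
  moreover have "evenperm t" unfolding t(1) using t
    by (simp add: evenperm_comp permutation_swap_id evenperm_swap)
  ultimately show ?thesis unfolding altgrp_def by simp
qed

lemma foldr_cons: "foldr (\<circ>) (t#ts) id = t \<circ> foldr (\<circ>) ts id"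
  by (simp only: foldr.simps o_apply)

lemma alt_comp:
  assumes "a \<in> altgrp n" "b \<in> altgrp n" shows "a \<circ> b \<in> altgrp n"
proof -
  have pa: "permutation a" "permutation b"
    using assms unfolding altgrp_def by (auto simp: permutation_permutes)
  show ?thesis using assms pa unfolding altgrp_def
    by (auto intro: permutes_compose simp: evenperm_comp)
qed

lemma t12_cancel: "t12 \<circ> ((t12 \<circ> x) \<circ> y) = x \<circ> y"
  by (simp add: fun_eq_iff)

lemma foldr_even:
  assumes "n \<ge> 2" "set ts \<subseteq> gensT n"
  shows "foldr (\<circ>) ts id \<in> altgrp n"
  using assms(2)
proof (induction ts)
  case Nil thus ?case unfolding altgrp_def using permutes_id[of "{1..n}"] by (simp add: id_def)
next
  case (Cons t ts)
  have a: "t \<in> altgrp n" using gens_alt Cons assms by auto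
  have b: "foldr (\<circ>) ts id \<in> altgrp n" by (rule Cons.IH) (use Cons.prems in simp)
  show ?case unfolding foldr_cons using a b by (rule alt_comp)
qed

lemma decomp:
  assumes "n \<ge> 2" "p permutes {1..n}"
  shows "\<exists>ts. set ts \<subseteq> gensT n \<and> (foldr (\<circ>) ts id = p \<or> t12 \<circ> foldr (\<circ>) ts id = p)"
  using assms(2) finite_atLeastAtMost[of 1 n]
proof (induction rule: permutes_induct)
  case id
  show ?case by (rule exI[of _ "[]"]) simp
next
  case (swap a b p)
  then obtain ts where ts: "set ts \<subseteq> gensT n"
     "foldr (\<circ>) ts id = p \<or> t12 \<circ> foldr (\<circ>) ts id = p" by blast
  show ?case
  proof (cases "foldr (\<circ>) ts id = p")
    case True
    have g: "t12 \<circ> transpose a b \<in> gensT n" using gen_mem swap by auto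
    have "t12 \<circ> foldr (\<circ>) ((t12 \<circ> transpose a b) # ts) id = transpose a b \<circ> p"
      unfolding foldr_cons True by (rule t12_cancel)
    moreover have "set ((t12 \<circ> transpose a b) # ts) \<subseteq> gensT n" using g ts(1) by simp
    ultimately show ?thesis by blast
  next
    case False
    hence p: "p = t12 \<circ> foldr (\<circ>) ts id" using ts by simp
    have m: "t12 a \<in> {1..n}" "t12 b \<in> {1..n}" "t12 a \<noteq> t12 b"
      using swap assms(1) by (auto simp: transpose_def)
    have g: "t12 \<circ> transpose (t12 a) (t12 b) \<in> gensT n" using gen_mem[OF m] .
    have "transpose a b \<circ> p = (transpose a b \<circ> t12) \<circ> foldr (\<circ>) ts id"
      using p by (simp add: comp_assoc)
    also have "\<dots> = foldr (\<circ>) ((t12 \<circ> transpose (t12 a) (t12 b)) # ts) id"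
      unfolding foldr_cons conj_tr ..
    finally have "foldr (\<circ>) ((t12 \<circ> transpose (t12 a) (t12 b)) # ts) id = transpose a b \<circ> p" ..
    moreover have "set ((t12 \<circ> transpose (t12 a) (t12 b)) # ts) \<subseteq> gensT n" using g ts(1) by simp
    ultimately show ?thesis by blast
  qed
qed

lemma gen_alt:
  assumes "n \<ge> 2" "v \<in> altgrp n"
  shows "\<exists>ts. set ts \<subseteq> gensT n \<and> foldr (\<circ>) ts id = v"
proof -
  have vp: "v permutes {1..n}" "evenperm v" using assms unfolding altgrp_def by auto
  obtain ts where ts: "set ts \<subseteq> gensT n" "foldr (\<circ>) ts id = v \<or> t12 \<circ> foldr (\<circ>) ts id = v"
    using decomp[OF assms(1) vp(1)] by blast
  have f: "foldr (\<circ>) ts id \<in> altgrp n" using foldr_even[OF assms(1) ts(1)] .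
  show ?thesis
  proof (cases "foldr (\<circ>) ts id = v")
    case True thus ?thesis using ts by blast
  next
    case False
    hence e: "v = t12 \<circ> foldr (\<circ>) ts id" using ts by simp
    have "permutation (foldr (\<circ>) ts id)" using f unfolding altgrp_def by (auto simp: permutation_permutes)
    hence "\<not> evenperm v" using f unfolding e altgrp_def
      by (simp add: evenperm_comp permutation_swap_id evenperm_swap)
    thus ?thesis using vp by simp
  qed
qed

lemma len1:
  assumes "n \<ge> 2" "v \<in> altgrp n"
  shows "lenT n v = 1 \<longleftrightarrow> v \<in> gensT n \<and> v \<noteq> id"
proof -
  let ?P = "\<lambda>k. \<exists>ts. length ts = k \<and> set ts \<subseteq> gensT n \<and> foldr (\<circ>) ts id = v"
  obtain k where k: "?P k" using gen_alt[OF assms] by blast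
  have P0: "?P 0 \<longleftrightarrow> v = id" by auto
  have P1: "?P 1 \<longleftrightarrow> v \<in> gensT n"
  proof
    assume "?P 1" then obtain ts where "length ts = 1" "set ts \<subseteq> gensT n" "foldr (\<circ>) ts id = v" by blast
    thus "v \<in> gensT n" by (cases ts) auto
  next
    assume "v \<in> gensT n" thus "?P 1" by (intro exI[of _ "[v]"]) auto
  qed
  show ?thesis
  proof
    assume l: "lenT n v = 1"
    have "?P (lenT n v)" unfolding lenT_def using k by (rule LeastI)
    moreover have "\<not> ?P 0" proof
      assume "?P 0" hence "lenT n v \<le> 0" unfolding lenT_def by (rule Least_le)
      thus False using l by simp
    qed
    ultimately show "v \<in> gensT n \<and> v \<noteq> id" using l P0 P1 by simp
  next
    assume h: "v \<in> gensT n \<and> v \<noteq> id"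
    show "lenT n v = 1" unfolding lenT_def
    proof (rule Least_equality)
      show "?P 1" using h P1 by simp
    next
      fix y assume "?P y" thus "1 \<le> y" using h P0 by (cases y) auto
    qed
  qed
qed

lemma acount_eq:
  assumes "n \<ge> 2"
  shows "a_count n 1 = card (gensT n - {id})"
proof -
  have "{v \<in> altgrp n. lenT n v = 1} = gensT n - {id}"
    using len1[OF assms] gens_alt[OF assms] by blast
  thus ?thesis unfolding a_count_def by simp
qed

lemma gens_fin: "finite (gensT n)"
proof -
  have "gensT n \<subseteq> (\<lambda>(i,j). t12 \<circ> transpose i j) ` ({1..n} \<times> {1..n})"
    unfolding gensT_def by force
  thus ?thesis by (rule finite_subset) auto
qed

theorem proposition5p2:
  fixes n :: nat
  assumes "n \<ge> 3"
  shows "a_count n 1 = a_count (n - 1) 1 + (n - 1)"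
proof -
  define f where "f = (\<lambda>i. t12 \<circ> transpose i n)"
  have fn: "f i n = t12 i" if "i < n" for i using that by (simp add: f_def)
  have t12ne: "t12 i \<noteq> n" if "i < n" for i using that assms by (auto simp: transpose_def)
  have split: "gensT n - {id} = (gensT (n-1) - {id}) \<union> f ` {1..<n}"
  proof
    show "gensT n - {id} \<subseteq> (gensT (n-1) - {id}) \<union> f ` {1..<n}"
    proof
      fix t assume "t \<in> gensT n - {id}"
      then obtain i j where t: "t = t12 \<circ> transpose i j" "1 \<le> i" "i < j" "j \<le> n" "t \<noteq> id"
        unfolding gensT_def by blast
      show "t \<in> (gensT (n-1) - {id}) \<union> f ` {1..<n}"
      proof (cases "j = n")
        case True thus ?thesis using t unfolding f_def by auto
      next
        case False
        hence "j \<le> n - 1" using t by simp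
        thus ?thesis using t unfolding gensT_def by blast
      qed
    qed
  next
    show "(gensT (n-1) - {id}) \<union> f ` {1..<n} \<subseteq> gensT n - {id}"
    proof
      fix t assume "t \<in> (gensT (n-1) - {id}) \<union> f ` {1..<n}"
      thus "t \<in> gensT n - {id}"
      proof
        assume "t \<in> gensT (n-1) - {id}"
        then obtain i j where t: "t = t12 \<circ> transpose i j" "1 \<le> i" "i < j" "j \<le> n - 1" "t \<noteq> id"
          unfolding gensT_def by blast
        have "j \<le> n" using t by simp
        thus ?thesis using t unfolding gensT_def by blast
      next
        assume "t \<in> f ` {1..<n}"
        then obtain i where i: "t = f i" "1 \<le> i" "i < n" by auto
        have "t n \<noteq> n" using i fn t12ne by simp
        hence "t \<noteq> id" by auto
        thus ?thesis using i unfolding gensT_def f_def by auto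
      qed
    qed
  qed
  have disj: "(gensT (n-1) - {id}) \<inter> f ` {1..<n} = {}"
  proof -
    { fix t assume t1: "t \<in> gensT (n-1)" and t2: "t \<in> f ` {1..<n}"
    from t1 obtain i j where "t = t12 \<circ> transpose i j" "1 \<le> i" "i < j" "j \<le> n - 1"
      unfolding gensT_def by blast
    moreover from t2 obtain k where "t = f k" "k < n" by auto
    ultimately have "t12 \<circ> transpose i j = f k" "1 \<le> i" "i < j" "j \<le> n - 1" "k < n" by simp_all
    hence "(t12 \<circ> transpose i j) n = t12 k" using fn by simp
    moreover have "(t12 \<circ> transpose i j) n = n" using \<open>j \<le> n - 1\<close> \<open>i < j\<close> assms
      by (auto simp: transpose_def)
    ultimately have False using t12ne \<open>k < n\<close> by simp }
    thus ?thesis by blast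
  qed
  have inj: "inj_on f {1..<n}"
  proof
    fix x y assume "x \<in> {1..<n}" "y \<in> {1..<n}" "f x = f y"
    hence "t12 x = t12 y" using fn by (metis atLeastLessThan_iff)
    thus "x = y" by (metis transpose_involutory)
  qed
  have "card (gensT n - {id}) = card (gensT (n-1) - {id}) + card (f ` {1..<n})"
    unfolding split using disj gens_fin by (intro card_Un_disjoint) auto
  also have "card (f ` {1..<n}) = n - 1" using card_image[OF inj] by simp
  finally have c: "card (gensT n - {id}) = card (gensT (n-1) - {id}) + (n - 1)" .
  have "n \<ge> 2" "n - 1 \<ge> 2" using assms by auto
  thus ?thesis using c acount_eq by simp
qed

end
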